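(* Let $N_p\in\mathbb{N}$ and let $X,Y\in\mathbb{C}^{N_p\times N_p}$ be such that the block matrix $W=\begin{bmatrix} X & Y^* \\ Y & X^*\end{bmatrix}$ is invertible with $W^{-1}=\eta W^\dagger \eta$, where $\eta=\begin{bmatrix} +I & 0\\ 0 & -I\end{bmatrix}$. Let $\sigma>0$ and let $F^{20},F^{02}\in\mathbb{C}^{N_p}$ be random vectors such that all $4N_p$ real numbers $\operatorname{Re}F^{20}_i,\operatorname{Re}F^{02}_i,\operatorname{Im}F^{20}_i,\operatorname{Im}F^{02}_i$ ($i=1,\dots,N_p$) are independent, identically distributed Gaussian random variables with mean $0$ and variance $\sigma^2$. Define the random vectors $T,\widetilde T\in\mathbb{C}^{N_p}$ by $$\begin{bmatrix} T\\ \widetilde T\end{bmatrix}=W^\dagger\begin{bmatrix} F^{20}\\ F^{02}\end{bmatrix}.$$ Then for every $i=1,\dots,N_p$, $$\mathbb{E}\big[|T_i|^2\big]=\mathbb{E}\big[|\widetilde T_i|^2\big]=4\sigma^2\Big(\tfrac12+\|Y\mathbf{e}_i\|^2\Big),$$ where $\mathbf{e}_i$ is the $i$-th standard basis vector of $\mathbb{C}^{N_p}$ and $\|\cdot\|$ is the Euclidean norm.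
   Context: $A^\dagger$ denotes the conjugate transpose, $A^T$ the transpose and $A^*$ the entrywise complex conjugate of a matrix $A$. In the physical interpretation, $X,Y$ are the QRPA forward/backward eigenmode amplitude matrices, $F^{20},F^{02}$ the matrix elements of a random excitation operator $\hat F$, and $T_i=\langle i|\hat F|0\rangle$, $\widetilde T_i=\langle 0|\hat F|i\rangle$ the transition strengths; these interpretations are not needed for the statement. *)

theory Defs
  imports "HOL-Analysis.Analysis" "HOL-Probability.Probability"
begin

definition adj_mat :: "complex^'n^'m \<Rightarrow> complex^'m^'n" where
  "adj_mat A = (\<chi> i j. cnj (A $ j $ i))"

definition conj_mat :: "complex^'n^'m \<Rightarrow> complex^'n^'m" where
  "conj_mat A = (\<chi> i j. cnj (A $ i $ j))"

definition block_mat ::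
  "complex^'n::finite^'n \<Rightarrow> complex^'n^'n \<Rightarrow> complex^'n^'n \<Rightarrow> complex^'n^'n \<Rightarrow> complex^('n+'n)^('n+'n)" where
  "block_mat A B C D = (\<chi> k l. case k of
      Inl i \<Rightarrow> (case l of Inl j \<Rightarrow> A $ i $ j | Inr j \<Rightarrow> B $ i $ j)
    | Inr i \<Rightarrow> (case l of Inl j \<Rightarrow> C $ i $ j | Inr j \<Rightarrow> D $ i $ j))"

definition W_mat :: "complex^'n::finite^'n \<Rightarrow> complex^'n^'n \<Rightarrow> complex^('n+'n)^('n+'n)" where
  "W_mat X Y = block_mat X (conj_mat Y) Y (conj_mat X)"

definition eta_mat :: "complex^('n::finite+'n)^('n+'n)" where
  "eta_mat = (\<chi> k l. if k = l then (case k of Inl _ \<Rightarrow> 1 | Inr _ \<Rightarrow> -1) else 0)"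

definition stack :: "complex^'n::finite \<Rightarrow> complex^'n \<Rightarrow> complex^('n+'n)" where
  "stack u v = (\<chi> k. case k of Inl i \<Rightarrow> u $ i | Inr i \<Rightarrow> v $ i)"

definition re_im_comps :: "('a \<Rightarrow> complex^'n) \<Rightarrow> ('a \<Rightarrow> complex^'n) \<Rightarrow> 'n \<times> bool \<times> bool \<Rightarrow> 'a \<Rightarrow> real" where
  "re_im_comps F20 F02 = (\<lambda>(i, re, is20) \<omega>.
      (if re then Re else Im) ((if is20 then F20 \<omega> else F02 \<omega>) $ i))"

end

theory Submission
  imports Defs
begin


lemma core:
  fixes g :: "'r::finite \<Rightarrow> 'a \<Rightarrow> real" and d :: "'r \<Rightarrow> complex"
  assumes M: "prob_space M"
    and indep: "prob_space.indep_vars M (\<lambda>_. borel) g UNIV"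
    and gauss: "\<And>k. distributed M lborel (g k) (normal_density 0 \<sigma>)"
    and sp: "\<sigma> > 0"
  shows "(LINT \<omega>|M. (cmod (\<Sum>r\<in>UNIV. d r * complex_of_real (g r \<omega>)))\<^sup>2) = \<sigma>\<^sup>2 * (\<Sum>r\<in>UNIV. (cmod (d r))\<^sup>2)"
proof -
  interpret prob_space M by (rule M)
  have meas[measurable]: "g r \<in> borel_measurable M" for r
    using gauss[of r] by (simp add: distributed_def)
  have int1: "integrable M (g r)" for r
    by (rule distributed_integrable_var[OF gauss]) (auto intro: integrable_normal_moment_nz_1[OF sp])
  have E1: "expectation (g r) = 0" for r
    using normal_distributed_expectation[OF sp gauss] .
  have int2: "integrable M (\<lambda>\<omega>. g r \<omega> * g r \<omega>)" for r
  proof -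
    have "integrable lborel (\<lambda>x. normal_density 0 \<sigma> x * (x - 0)^2)"
      by (rule integrable_normal_moment[OF sp])
    then show ?thesis
      using distributed_integrable[OF gauss[of r], of "\<lambda>x. x * x"]
      by (simp add: power2_eq_square)
  qed
  have E2: "expectation (\<lambda>\<omega>. g r \<omega> * g r \<omega>) = \<sigma>\<^sup>2" for r
    using normal_distributed_variance[OF sp gauss[of r]] E1[of r]
    by (simp add: power2_eq_square)
  have int3: "integrable M (\<lambda>\<omega>. g r \<omega> * g s \<omega>)" for r s
  proof (cases "r = s")
    case True then show ?thesis using int2 by simp
  next
    case False
    have "integrable M (\<lambda>\<omega>. \<Prod>i\<in>{r,s}. g i \<omega>)"
      by (rule indep_vars_integrable) (auto intro: indep_vars_subset[OF indep] int1)
    then show ?thesis using False by simp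
  qed
  have E3: "expectation (\<lambda>\<omega>. g r \<omega> * g s \<omega>) = (if r = s then \<sigma>\<^sup>2 else 0)" for r s
  proof (cases "r = s")
    case True then show ?thesis using E2 by simp
  next
    case False
    have "expectation (\<lambda>\<omega>. \<Prod>i\<in>{r,s}. g i \<omega>) = (\<Prod>i\<in>{r,s}. expectation (g i))"
      by (rule indep_vars_lebesgue_integral) (auto intro: indep_vars_subset[OF indep] int1)
    then show ?thesis using False E1 by simp
  qed
  have pw: "(cmod (\<Sum>r\<in>UNIV. d r * complex_of_real (g r \<omega>)))\<^sup>2
      = (\<Sum>r\<in>UNIV. \<Sum>s\<in>UNIV. Re (d r * cnj (d s)) * (g r \<omega> * g s \<omega>))" for \<omega>
  proof -
    let ?z = "\<Sum>r\<in>UNIV. d r * complex_of_real (g r \<omega>)"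
    have "(cmod ?z)\<^sup>2 = Re (?z * cnj ?z)"
      by (simp only: complex_mult_cnj cmod_power2 Re_complex_of_real)
    also have "?z * cnj ?z = (\<Sum>r\<in>UNIV. \<Sum>s\<in>UNIV. (d r * cnj (d s)) * complex_of_real (g r \<omega> * g s \<omega>))"
      by (simp add: sum_product cnj_sum mult_ac)
    finally show ?thesis by (simp add: Re_sum)
  qed
  have "(LINT \<omega>|M. (cmod (\<Sum>r\<in>UNIV. d r * complex_of_real (g r \<omega>)))\<^sup>2)
     = (LINT \<omega>|M. (\<Sum>r\<in>UNIV. \<Sum>s\<in>UNIV. Re (d r * cnj (d s)) * (g r \<omega> * g s \<omega>)))"
    by (simp add: pw)
  also have "\<dots> = (\<Sum>r\<in>UNIV. \<Sum>s\<in>UNIV. Re (d r * cnj (d s)) * expectation (\<lambda>\<omega>. g r \<omega> * g s \<omega>))"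
    by (simp add: integral_sum integrable_sum int3)
  also have "\<dots> = (\<Sum>r\<in>UNIV. Re (d r * cnj (d r)) * \<sigma>\<^sup>2)"
    by (simp add: E3 if_distrib cong: if_cong)
  also have "\<dots> = \<sigma>\<^sup>2 * (\<Sum>r\<in>UNIV. (cmod (d r))\<^sup>2)"
    by (simp add: sum_distrib_left complex_mult_cnj cmod_power2 mult_ac)
  finally show ?thesis .
qed


definition sg :: "'n + 'n \<Rightarrow> complex" where
  "sg k = (case k of Inl _ \<Rightarrow> 1 | Inr _ \<Rightarrow> -1)"

lemma sum_Plus_UNIV:
  fixes f :: "'n::finite + 'm::finite \<Rightarrow> 'b::comm_monoid_add"
  shows "(\<Sum>k\<in>UNIV. f k) = (\<Sum>j\<in>UNIV. f (Inl j)) + (\<Sum>j\<in>UNIV. f (Inr j))"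
proof -
  have "(\<Sum>k\<in>UNIV. f k) = (\<Sum>k\<in>(UNIV::'n set) <+> (UNIV::'m set). f k)"
    by (simp add: UNIV_Plus_UNIV)
  also have "\<dots> = (\<Sum>j\<in>UNIV. f (Inl j)) + (\<Sum>j\<in>UNIV. f (Inr j))"
    using sum.Plus[of "UNIV::'n set" "UNIV::'m set" f] by (simp add: comp_def)
  finally show ?thesis .
qed

lemma sum_prod3_UNIV:
  fixes f :: "'n::finite \<times> bool \<times> bool \<Rightarrow> 'b::comm_monoid_add"
  shows "(\<Sum>r\<in>UNIV. f r) = (\<Sum>j\<in>UNIV. f (j,True,True) + f (j,True,False) + f (j,False,True) + f (j,False,False))"
proof -
  have "(\<Sum>r\<in>UNIV. f r) = (\<Sum>r\<in>(UNIV::'n set) \<times> (UNIV::bool set) \<times> (UNIV::bool set). f r)"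
    by (simp add: UNIV_Times_UNIV)
  also have "\<dots> = (\<Sum>j\<in>UNIV. \<Sum>p\<in>(UNIV::bool set) \<times> (UNIV::bool set). f (j,p))"
    by (simp add: sum.cartesian_product)
  also have "\<dots> = (\<Sum>j\<in>UNIV. f (j,True,True) + f (j,True,False) + f (j,False,True) + f (j,False,False))"
    by (simp add: sum.cartesian_product[symmetric] UNIV_bool add_ac)
  finally show ?thesis .
qed

lemma eta_left: "(eta_mat ** A) $ k $ l = sg k * A $ k $ l"
  by (simp add: matrix_matrix_mult_def eta_mat_def sg_def if_distrib[of "\<lambda>x. x * _"] cong: if_cong)

lemma eta_right: "(A ** eta_mat) $ k $ l = A $ k $ l * sg l"
  by (simp add: matrix_matrix_mult_def eta_mat_def sg_def if_distrib[of "\<lambda>x. _ * x"] cong: if_cong)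

lemma col_norm:
  fixes X Y :: "complex^'n::finite^'n"
  assumes W_inv: "invertible (W_mat X Y)"
    and W_inv_eq: "matrix_inv (W_mat X Y) = eta_mat ** adj_mat (W_mat X Y) ** eta_mat"
  shows "(\<Sum>j\<in>UNIV. (cmod (X$j$i))\<^sup>2) = 1 + (\<Sum>j\<in>UNIV. (cmod (Y$j$i))\<^sup>2)"
proof -
  let ?W = "W_mat X Y"
  have "matrix_inv ?W ** ?W = mat 1"
    using W_inv unfolding invertible_def matrix_inv_def by (rule someI2_ex) auto
  then have "(eta_mat ** adj_mat ?W ** eta_mat ** ?W) $ Inl i $ Inl i = 1"
    using W_inv_eq by (simp add: mat_def)
  then have "(\<Sum>m\<in>UNIV. sg (Inl i :: 'n + 'n) * cnj (?W $ m $ Inl i) * sg m * ?W $ m $ Inl i) = 1"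
    by (simp add: matrix_matrix_mult_def[of "_ ** eta_mat"] eta_right eta_left adj_mat_def)
  then have "(\<Sum>j\<in>UNIV. cnj (X$j$i) * X$j$i) - (\<Sum>j\<in>UNIV. cnj (Y$j$i) * Y$j$i) = 1"
    by (simp add: sum_Plus_UNIV sg_def W_mat_def block_mat_def sum_negf)
  moreover have eq: "\<And>z. cnj z * z = complex_of_real ((cmod z)\<^sup>2)"
    by (simp only: complex_norm_square mult.commute)
  ultimately have "complex_of_real ((\<Sum>j\<in>UNIV. (cmod (X$j$i))\<^sup>2) - (\<Sum>j\<in>UNIV. (cmod (Y$j$i))\<^sup>2)) = 1"
    by (simp only: eq of_real_sum[symmetric] of_real_diff[symmetric])
  then show ?thesis
    by (metis add.commute diff_eq_eq of_real_eq_1_iff)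
qed


definition dd :: "('n + 'n \<Rightarrow> complex) \<Rightarrow> 'n \<times> bool \<times> bool \<Rightarrow> complex" where
  "dd c r = (case r of (j, re, is20) \<Rightarrow> (if is20 then c (Inl j) else c (Inr j)) * (if re then 1 else \<i>))"

lemma split_re_im: "c * z = c * complex_of_real (Re z) + c * \<i> * complex_of_real (Im z)"
  by (simp add: complex_eq_iff)

lemma lin_expand:
  fixes c :: "'n::finite + 'n \<Rightarrow> complex"
  shows "(\<Sum>k\<in>UNIV. c k * stack (F20 \<omega>) (F02 \<omega>) $ k)
    = (\<Sum>r\<in>UNIV. dd c r * complex_of_real (re_im_comps F20 F02 r \<omega>))"
  apply (subst sum_Plus_UNIV, subst sum_prod3_UNIV)
  apply (simp only: sum.distrib[symmetric])
  apply (rule sum.cong[OF refl])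
  apply (simp add: stack_def dd_def re_im_comps_def complex_eq_iff algebra_simps)
  done

lemma dd_norm:
  fixes c :: "'n::finite + 'n \<Rightarrow> complex"
  shows "(\<Sum>r\<in>UNIV. (cmod (dd c r))\<^sup>2) = 2 * (\<Sum>k\<in>UNIV. (cmod (c k))\<^sup>2)"
  by (simp add: sum_Plus_UNIV sum_prod3_UNIV dd_def norm_mult sum.distrib sum_distrib_left)

lemma norm_col: "(norm ((Y::complex^'n::finite^'n) *v axis i 1))\<^sup>2 = (\<Sum>j\<in>UNIV. (cmod (Y$j$i))\<^sup>2)"
proof -
  have "(Y *v axis i 1) $ j = Y $ j $ i" for j
    by (simp add: matrix_vector_mult_def axis_def if_distrib[of "\<lambda>x. _ * x"] cong: if_cong)
  then show ?thesis
    by (simp add: norm_vec_def L2_set_def sum_nonneg)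
qed

theorem mainTheorem1:
  fixes X Y :: "complex^'n^'n"
    and M :: "'a measure"
    and \<sigma> :: real
    and F20 F02 :: "'a \<Rightarrow> complex^'n"
  assumes W_inv: "invertible (W_mat X Y)"
    and W_inv_eq: "matrix_inv (W_mat X Y) = eta_mat ** adj_mat (W_mat X Y) ** eta_mat"
    and sigma_pos: "\<sigma> > 0"
    and M: "prob_space M"
    and indep: "prob_space.indep_vars M (\<lambda>_. borel) (re_im_comps F20 F02) UNIV"
    and gauss: "\<And>k. distributed M lborel (re_im_comps F20 F02 k) (normal_density 0 \<sigma>)"
  shows "\<forall>i.
      (LINT \<omega>|M. (cmod ((adj_mat (W_mat X Y) *v stack (F20 \<omega>) (F02 \<omega>)) $ Inl i))\<^sup>2)
        = 4 * \<sigma>\<^sup>2 * (1/2 + (norm (Y *v axis i 1))\<^sup>2)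
    \<and> (LINT \<omega>|M. (cmod ((adj_mat (W_mat X Y) *v stack (F20 \<omega>) (F02 \<omega>)) $ Inr i))\<^sup>2)
        = 4 * \<sigma>\<^sup>2 * (1/2 + (norm (Y *v axis i 1))\<^sup>2)"
proof
  fix i
  let ?W = "W_mat X Y"
  have gen: "(LINT \<omega>|M. (cmod ((adj_mat ?W *v stack (F20 \<omega>) (F02 \<omega>)) $ l))\<^sup>2)
      = \<sigma>\<^sup>2 * (2 * (\<Sum>k\<in>UNIV. (cmod (?W $ k $ l))\<^sup>2))" for l
  proof -
    let ?c = "\<lambda>k. cnj (?W $ k $ l)"
    have "(adj_mat ?W *v stack (F20 \<omega>) (F02 \<omega>)) $ l
        = (\<Sum>r\<in>UNIV. dd ?c r * complex_of_real (re_im_comps F20 F02 r \<omega>))" for \<omega>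
      by (simp add: matrix_vector_mult_def adj_mat_def lin_expand[symmetric])
    then have "(LINT \<omega>|M. (cmod ((adj_mat ?W *v stack (F20 \<omega>) (F02 \<omega>)) $ l))\<^sup>2)
      = (LINT \<omega>|M. (cmod (\<Sum>r\<in>UNIV. dd ?c r * complex_of_real (re_im_comps F20 F02 r \<omega>)))\<^sup>2)"
      by simp
    also have "\<dots> = \<sigma>\<^sup>2 * (\<Sum>r\<in>UNIV. (cmod (dd ?c r))\<^sup>2)"
      by (rule core[OF M indep gauss sigma_pos])
    finally show ?thesis by (simp add: dd_norm)
  qed
  have SX: "(\<Sum>j\<in>UNIV. (cmod (X$j$i))\<^sup>2) = 1 + (\<Sum>j\<in>UNIV. (cmod (Y$j$i))\<^sup>2)"
    by (rule col_norm[OF W_inv W_inv_eq])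
  have c1: "(\<Sum>k\<in>UNIV. (cmod (?W $ k $ Inl i))\<^sup>2) = (\<Sum>j\<in>UNIV. (cmod (X$j$i))\<^sup>2) + (\<Sum>j\<in>UNIV. (cmod (Y$j$i))\<^sup>2)"
    by (simp add: sum_Plus_UNIV W_mat_def block_mat_def)
  have c2: "(\<Sum>k\<in>UNIV. (cmod (?W $ k $ Inr i))\<^sup>2) = (\<Sum>j\<in>UNIV. (cmod (X$j$i))\<^sup>2) + (\<Sum>j\<in>UNIV. (cmod (Y$j$i))\<^sup>2)"
    by (simp add: sum_Plus_UNIV W_mat_def block_mat_def conj_mat_def add.commute)
  show "(LINT \<omega>|M. (cmod ((adj_mat (W_mat X Y) *v stack (F20 \<omega>) (F02 \<omega>)) $ Inl i))\<^sup>2)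
        = 4 * \<sigma>\<^sup>2 * (1/2 + (norm (Y *v axis i 1))\<^sup>2)
    \<and> (LINT \<omega>|M. (cmod ((adj_mat (W_mat X Y) *v stack (F20 \<omega>) (F02 \<omega>)) $ Inr i))\<^sup>2)
        = 4 * \<sigma>\<^sup>2 * (1/2 + (norm (Y *v axis i 1))\<^sup>2)"
    unfolding gen c1 c2 SX norm_col by (simp add: algebra_simps)
qed

end
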